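(* Let $n\ge3$ and let $\mathcal T$ be an admissible family of arcs with endpoints in $[n]$ consisting of exactly $n-1$ arcs (equivalently, a set of $n-1$ facets of $W_n$ with nonempty intersection). Then the vectors $\{e_i-e_j:[i,j)\in\mathcal T\}$ form a $\mathbb{Z}$-basis of the type A root lattice $\Lambda_n=\{x\in\mathbb{Z}^n:\sum_i x_i=0\}$. Consequently $(W_n,\phi_n)$ is a combinatorial quasitoric pair.
   Context: Identify $[n]$ with the vertices of a regular $n$-gon in $S^1$, labelled counterclockwise, with counterclockwise order $\preceq$; for $a\ne b\in[n]$, $[a,b)=\{z\in S^1:a\preceq z\prec b\}$. A finite collection of such arcs is admissible if any two distinct members $I,J$ are either intersecting and strictly nested, or disjoint with the sink of neither equal to the source of the other. Admissible families of arcs correspond to faces of the $(n-1)$-dimensional cyclohedron $W_n$, single arcs to facets. $\phi_n$ assigns to the facet $[i,j)$ the vector $e_i-e_j$. A combinatorial quasitoric pair $(P,\phi)$ consists of a simple $(n-1)$-polytope $P$ and an assignment of lattice vectors in $\mathbb{Z}^{n-1}$ to facets such that the vectors of any $n-1$ facets meeting in a vertex form a lattice basis. *)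

theory Defs
  imports Complex_Main
begin

text \<open>The circle S^1 is modelled as R / nZ; vertex i of the regular n-gon sits at
  position i (so vertex n coincides with position 0).  Subsets of S^1 are represented
  by their nZ-periodic preimages in R.  cdist n x y is the counterclockwise
  distance from x to y, a value in [0,n).\<close>

definition cdist :: "nat \<Rightarrow> real \<Rightarrow> real \<Rightarrow> real" where
  "cdist n x y = (y - x) - real n * of_int \<lfloor>(y - x) / real n\<rfloor>"

text \<open>An arc is a pair (a,b) (source a, sink b) of distinct vertices in [n];
  its point set is [a,b) = {z : a \<preceq> z \<prec> b} in counterclockwise order.\<close>

definition arc_set :: "nat \<Rightarrow> nat \<times> nat \<Rightarrow> real set" where
  "arc_set n I = {z. cdist n (real (fst I)) z < cdist n (real (fst I)) (real (snd I))}"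

definition is_arc :: "nat \<Rightarrow> nat \<times> nat \<Rightarrow> bool" where
  "is_arc n I \<longleftrightarrow> fst I \<in> {1..n} \<and> snd I \<in> {1..n} \<and> fst I \<noteq> snd I"

definition admissible :: "nat \<Rightarrow> (nat \<times> nat) set \<Rightarrow> bool" where
  "admissible n T \<longleftrightarrow> finite T \<and> (\<forall>I\<in>T. is_arc n I) \<and>
     (\<forall>I\<in>T. \<forall>J\<in>T. I \<noteq> J \<longrightarrow>
        ((arc_set n I \<inter> arc_set n J \<noteq> {} \<and>
            (arc_set n I \<subset> arc_set n J \<or> arc_set n J \<subset> arc_set n I))
         \<or> (arc_set n I \<inter> arc_set n J = {} \<and> snd I \<noteq> fst J \<and> snd J \<noteq> fst I)))"

text \<open>Vectors in Z^n are functions nat \<Rightarrow> int supported on {1..n}.\<close>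

definition root_vec :: "nat \<times> nat \<Rightarrow> nat \<Rightarrow> int" where
  "root_vec I k = (if k = fst I then 1 else 0) - (if k = snd I then 1 else 0)"

definition root_lattice :: "nat \<Rightarrow> (nat \<Rightarrow> int) set" where
  "root_lattice n = {x. (\<forall>k. k \<notin> {1..n} \<longrightarrow> x k = 0) \<and> (\<Sum>k=1..n. x k) = 0}"

definition is_Z_basis :: "('i \<Rightarrow> nat \<Rightarrow> int) \<Rightarrow> 'i set \<Rightarrow> (nat \<Rightarrow> int) set \<Rightarrow> bool" where
  "is_Z_basis v T L \<longleftrightarrow> finite T \<and> (\<forall>t\<in>T. v t \<in> L) \<and>
     (\<forall>x\<in>L. \<exists>!c. (\<forall>t. t \<notin> T \<longrightarrow> c t = 0) \<and> x = (\<lambda>k. \<Sum>t\<in>T. c t * v t k))"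

end

theory Submission
  imports Defs
begin

lemma cdist_int:
  assumes n: "n > 0" and e: "y - x = of_int m + f" and f: "0 \<le> f" "f < 1"
  shows "cdist n x y = of_int (m mod int n) + f"
proof -
  define q where "q = m div int n"
  define r where "r = m mod int n"
  have m: "m = int n * q + r" by (simp add: q_def r_def)
  have r: "0 \<le> r" "r < int n" using n by (auto simp: r_def)
  have r1: "real_of_int r \<le> real n - 1" using r by linarith
  have eq: "(y - x) / real n = of_int q + (of_int r + f) / real n"
    using n by (simp add: e m field_simps)
  have "0 \<le> (of_int r + f)/real n" using r f by simp
  moreover have "(of_int r + f) / real n < 1" using r1 f n by (simp add: divide_less_eq)
  ultimately have "\<lfloor>(y-x)/real n\<rfloor> = q" unfolding eq by (simp add: floor_eq_iff)
  moreover have "r mod int n = r" using r by simp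
  ultimately show ?thesis unfolding cdist_def using n by (simp add: e m algebra_simps)
qed

definition md :: "nat \<Rightarrow> int \<Rightarrow> int" where
  "md n m = (if 0 \<le> m then m else m + int n)"

lemma mod_small: "- int n \<le> m \<Longrightarrow> m < int n \<Longrightarrow> m mod int n = md n m"
proof (cases "0 \<le> m")
  case True
  assume "m < int n" then show ?thesis using True by (simp add: md_def)
next
  case False
  assume a: "- int n \<le> m" "m < int n"
  have "m mod int n = (m + int n) mod int n" by simp
  also have "\<dots> = m + int n" using a False by (intro mod_pos_pos_trivial) auto
  finally show ?thesis using False by (simp add: md_def)
qed

lemma mem_int:
  assumes "n > 0" "k \<in> {1..n}" "a \<in> {1..n}" "b \<in> {1..n}"
  shows "real k \<in> arc_set n (a,b) \<longleftrightarrow> md n (int k - int a) < md n (int b - int a)"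
proof -
  have "cdist n (real a) (real k) = of_int ((int k - int a) mod int n) + 0"
    using assms by (intro cdist_int) auto
  moreover have "cdist n (real a) (real b) = of_int ((int b - int a) mod int n) + 0"
    using assms by (intro cdist_int) auto
  moreover have "(int k - int a) mod int n = md n (int k - int a)"
    using assms by (intro mod_small) auto
  moreover have "(int b - int a) mod int n = md n (int b - int a)"
    using assms by (intro mod_small) auto
  ultimately show ?thesis by (simp add: arc_set_def)
qed

lemma mem_half:
  assumes "n > 0" "k \<in> {1..n}" "a \<in> {1..n}" "b \<in> {1..n}"
  shows "real k - 1/2 \<in> arc_set n (a,b) \<longleftrightarrow> md n (int k - 1 - int a) < md n (int b - int a)"
proof -
  have "cdist n (real a) (real k - 1/2) = of_int ((int k - 1 - int a) mod int n) + 1/2"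
    using assms by (intro cdist_int) auto
  moreover have "cdist n (real a) (real b) = of_int ((int b - int a) mod int n) + 0"
    using assms by (intro cdist_int) auto
  moreover have "(int k - 1 - int a) mod int n = md n (int k - 1 - int a)"
    using assms by (intro mod_small) auto
  moreover have "(int b - int a) mod int n = md n (int b - int a)"
    using assms by (intro mod_small) auto
  moreover have "\<And>u v::int. real_of_int u + 1/2 < real_of_int v \<longleftrightarrow> u < v"
  proof -
    fix u v :: int
    show "real_of_int u + 1/2 < real_of_int v \<longleftrightarrow> u < v"
    proof
      assume "real_of_int u + 1/2 < real_of_int v"
      then have "real_of_int u < real_of_int v" by linarith
      then show "u < v" by simp
    next
      assume "u < v"
      then have "u + 1 \<le> v" by simp
      then have "real_of_int u + 1 \<le> real_of_int v" by linarith
      then show "real_of_int u + 1/2 < real_of_int v" by linarith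
    qed
  qed
  ultimately show ?thesis by (simp add: arc_set_def)
qed

lemma pairJ:
  assumes n: "n \<ge> 3" and v: "a \<in> {1..n}" "b \<in> {1..n}" "c \<in> {1..n}" "d \<in> {1..n}"
    and ab: "a \<noteq> b" and cd: "c \<noteq> d" and ne: "(c,d) \<noteq> (a,b)"
    and nsub: "\<not> arc_set n (c,d) \<subset> arc_set n (a,b)"
    and adm: "(arc_set n (a,b) \<inter> arc_set n (c,d) \<noteq> {} \<and>
            (arc_set n (a,b) \<subset> arc_set n (c,d) \<or> arc_set n (c,d) \<subset> arc_set n (a,b)))
         \<or> (arc_set n (a,b) \<inter> arc_set n (c,d) = {} \<and> b \<noteq> c \<and> d \<noteq> a)"
  shows "c \<noteq> b \<and> d \<noteq> a \<and> (c = a \<longrightarrow> arc_set n (a,b) \<subseteq> arc_set n (c,d))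
     \<and> (d = b \<longrightarrow> arc_set n (a,b) \<subseteq> arc_set n (c,d))"
proof -
  have n0: "n > 0" using n by simp
  have aA: "real a \<in> arc_set n (a,b)"
    using mem_int[OF n0 v(1) v(1) v(2)] ab v by (simp add: md_def)
  have bA: "real b - 1/2 \<in> arc_set n (a,b)"
    using mem_half[OF n0 v(2) v(1) v(2)] ab v by (auto simp add: md_def)
  from adm nsub consider (sub) "arc_set n (a,b) \<subseteq> arc_set n (c,d)"
    | (dis) "arc_set n (a,b) \<inter> arc_set n (c,d) = {}" "b \<noteq> c" "d \<noteq> a" by blast
  then show ?thesis
  proof cases
    case sub
    have aB: "real a \<in> arc_set n (c,d)" using aA sub by blast
    have bB: "real b - 1/2 \<in> arc_set n (c,d)" using bA sub by blast
    have "c \<noteq> b"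
    proof
      assume "c = b"
      then show False using bB mem_half[OF n0 v(2) v(3) v(4)] v cd by (auto simp add: md_def split: if_splits)
    qed
    moreover have "d \<noteq> a"
    proof
      assume "d = a"
      then show False using aB mem_int[OF n0 v(1) v(3) v(4)] v by (auto simp add: md_def)
    qed
    ultimately show ?thesis using sub by blast
  next
    case dis
    have "c \<noteq> a"
    proof
      assume ca: "c = a"
      have "real a \<in> arc_set n (c,d)"
        using mem_int[OF n0 v(1) v(3) v(4)] ca cd v by (simp add: md_def)
      then show False using aA dis by blast
    qed
    moreover have "d \<noteq> b"
    proof
      assume db: "d = b"
      have "real b - 1/2 \<in> arc_set n (c,d)"
        using mem_half[OF n0 v(2) v(3) v(4)] db cd v by (auto simp add: md_def)
      then show False using bA dis by blast
    qed
    ultimately show ?thesis using dis by blast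
  qed
qed

lemma final_contra:
  assumes n: "n \<ge> 3" and v: "a \<in> {1..n}" "b \<in> {1..n}" "c \<in> {1..n}" "d \<in> {1..n}"
    and ab: "a \<noteq> b" and db: "d \<noteq> b" and ca: "c \<noteq> a" and ad: "a \<noteq> d" and cb: "c \<noteq> b"
    and s1: "arc_set n (a,b) \<subseteq> arc_set n (a,d)"
    and s2: "arc_set n (a,b) \<subseteq> arc_set n (c,b)"
    and adm: "(arc_set n (a,d) \<inter> arc_set n (c,b) \<noteq> {} \<and>
            (arc_set n (a,d) \<subset> arc_set n (c,b) \<or> arc_set n (c,b) \<subset> arc_set n (a,d)))
         \<or> (arc_set n (a,d) \<inter> arc_set n (c,b) = {} \<and> d \<noteq> c \<and> b \<noteq> a)"
  shows False
proof -
  have n0: "n > 0" using n by simp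
  have aA: "real a \<in> arc_set n (a,b)"
    using mem_int[OF n0 v(1) v(1) v(2)] ab v by (simp add: md_def)
  have bA: "real b - 1/2 \<in> arc_set n (a,b)"
    using mem_half[OF n0 v(2) v(1) v(2)] ab v by (auto simp add: md_def)
  have b1: "real b - 1/2 \<in> arc_set n (a,d)" using bA s1 by blast
  have bd: "real b \<in> arc_set n (a,d)"
    using b1 mem_half[OF n0 v(2) v(1) v(4)] mem_int[OF n0 v(2) v(1) v(4)] v db
    by (auto simp add: md_def split: if_splits)
  have bnot: "real b \<notin> arc_set n (c,b)"
    using mem_int[OF n0 v(2) v(3) v(2)] by simp
  have a2: "real a \<in> arc_set n (c,b)" using aA s2 by blast
  have ah: "real a - 1/2 \<in> arc_set n (c,b)"
    using a2 mem_half[OF n0 v(1) v(3) v(2)] mem_int[OF n0 v(1) v(3) v(2)] v ca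
    by (auto simp add: md_def split: if_splits)
  have anot: "real a - 1/2 \<notin> arc_set n (a,d)"
    using mem_half[OF n0 v(1) v(1) v(4)] v by (auto simp add: md_def)
  have a1: "real a \<in> arc_set n (a,d)" using aA s1 by blast
  show False using adm bd bnot ah anot a1 a2 by blast
qed

definition leafp :: "(nat \<times> nat) set \<Rightarrow> bool" where
  "leafp T \<longleftrightarrow> (\<forall>S\<subseteq>T. S \<noteq> {} \<longrightarrow>
     (\<exists>I\<in>S. \<exists>v. (v = fst I \<or> v = snd I) \<and> (\<forall>J\<in>S. J \<noteq> I \<longrightarrow> fst J \<noteq> v \<and> snd J \<noteq> v)))"

lemma sum_root_vec:
  assumes "finite V" "fst I \<in> V" "snd I \<in> V" "fst I \<noteq> snd I"
  shows "(\<Sum>k\<in>V. root_vec I k) = 0"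
proof -
  have "(\<Sum>k\<in>V. root_vec I k) = (\<Sum>k\<in>V. (if k = fst I then 1 else 0)) - (\<Sum>k\<in>V. (if k = snd I then 1 else 0))"
    unfolding root_vec_def by (simp add: sum_subtractf)
  also have "\<dots> = 0" using assms by (simp add: sum.delta)
  finally show ?thesis .
qed

lemma forest_basis:
  "\<lbrakk>finite T; finite V; \<forall>I\<in>T. fst I \<in> V \<and> snd I \<in> V \<and> fst I \<noteq> snd I; leafp T;
    card T + 1 = card V; \<forall>k. k \<notin> V \<longrightarrow> x k = 0; (\<Sum>k\<in>V. x k) = 0\<rbrakk>
   \<Longrightarrow> \<exists>!c. (\<forall>t. t \<notin> T \<longrightarrow> c t = 0) \<and> x = (\<lambda>k. \<Sum>t\<in>T. c t * root_vec t k)"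
proof (induction "card T" arbitrary: T V x)
  case 0
  then have T: "T = {}" by simp
  then obtain w where V: "V = {w}" using 0 card_1_singletonE by (metis One_nat_def add_0)
  have x0: "x = (\<lambda>k. 0)"
  proof
    fix k show "x k = 0" using 0 V by (cases "k = w") auto
  qed
  show ?case
    by (rule ex1I[where a="\<lambda>t. 0"]) (auto simp: T x0)
next
  case (Suc m)
  from Suc.prems(4) have "T \<noteq> {} \<Longrightarrow> \<exists>I\<in>T. \<exists>v. (v = fst I \<or> v = snd I) \<and> (\<forall>J\<in>T. J \<noteq> I \<longrightarrow> fst J \<noteq> v \<and> snd J \<noteq> v)"
    unfolding leafp_def by blast
  moreover have "T \<noteq> {}" using Suc.hyps(2) by auto
  ultimately obtain I v where I: "I \<in> T" and v: "v = fst I \<or> v = snd I"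
    and lf: "\<And>J. J \<in> T \<Longrightarrow> J \<noteq> I \<Longrightarrow> fst J \<noteq> v \<and> snd J \<noteq> v" by blast
  have IV: "fst I \<in> V" "snd I \<in> V" "fst I \<noteq> snd I" using Suc.prems(3) I by auto
  have vV: "v \<in> V" using v IV by auto
  define s where "s = root_vec I v"
  have ss: "s * s = 1" using v IV(3) by (auto simp: s_def root_vec_def)
  define \<alpha> where "\<alpha> = x v * s"
  define x' where "x' = (\<lambda>k. x k - \<alpha> * root_vec I k)"
  define T' where "T' = T - {I}"
  define V' where "V' = V - {v}"
  have x'v: "x' v = 0" unfolding x'_def \<alpha>_def s_def[symmetric] by (simp add: ss mult.assoc)
  have cT': "m = card T'" using Suc.hyps(2) I Suc.prems(1) by (simp add: T'_def)
  have fT': "finite T'" using Suc.prems(1) by (simp add: T'_def)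
  have fV': "finite V'" using Suc.prems(2) by (simp add: V'_def)
  have eT': "\<forall>J\<in>T'. fst J \<in> V' \<and> snd J \<in> V' \<and> fst J \<noteq> snd J"
    using Suc.prems(3) lf by (auto simp: T'_def V'_def)
  have lT': "leafp T'" using Suc.prems(4) unfolding leafp_def T'_def by blast
  have cV': "card T' + 1 = card V'" using Suc.prems(5) Suc.prems(2) vV Suc.hyps(2) cT'
    by (simp add: V'_def)
  have sx': "\<forall>k. k \<notin> V' \<longrightarrow> x' k = 0"
  proof (intro allI impI)
    fix k assume "k \<notin> V'"
    then consider "k = v" | "k \<notin> V" by (auto simp: V'_def)
    then show "x' k = 0"
    proof cases
      case 1 then show ?thesis using x'v by simp
    next
      case 2 then have "k \<noteq> fst I" "k \<noteq> snd I" using IV by auto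
      then show ?thesis using 2 Suc.prems(6) by (simp add: x'_def root_vec_def)
    qed
  qed
  have sumx': "(\<Sum>k\<in>V'. x' k) = 0"
  proof -
    have "(\<Sum>k\<in>V'. x' k) = (\<Sum>k\<in>V. x' k)"
      using Suc.prems(2) vV x'v by (simp add: V'_def sum.remove)
    also have "\<dots> = (\<Sum>k\<in>V. x k) - \<alpha> * (\<Sum>k\<in>V. root_vec I k)"
      by (simp add: x'_def sum_subtractf sum_distrib_left)
    also have "\<dots> = 0" using Suc.prems(7) sum_root_vec[OF Suc.prems(2) IV] by simp
    finally show ?thesis .
  qed
  from Suc.hyps(1)[OF cT' fT' fV' eT' lT' cV' sx' sumx']
  obtain c' where c': "(\<forall>t. t \<notin> T' \<longrightarrow> c' t = 0)" "x' = (\<lambda>k. \<Sum>t\<in>T'. c' t * root_vec t k)"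
    and c'u: "\<And>c. (\<forall>t. t \<notin> T' \<longrightarrow> c t = 0) \<and> x' = (\<lambda>k. \<Sum>t\<in>T'. c t * root_vec t k) \<Longrightarrow> c = c'"
    by blast
  have split: "\<And>c k. (\<Sum>t\<in>T. c t * root_vec t k) = c I * root_vec I k + (\<Sum>t\<in>T'. c t * root_vec t k)"
    using Suc.prems(1) I by (simp add: T'_def sum.remove)
  have atv: "\<And>c. (\<Sum>t\<in>T'. c t * root_vec t v) = 0"
    using lf by (intro sum.neutral) (auto simp: T'_def root_vec_def)
  show ?case
  proof (rule ex1I[where a="c'(I := \<alpha>)"])
    have c'I: "c' I = 0" using c'(1) unfolding T'_def by blast
    have "(\<Sum>t\<in>T'. (c'(I := \<alpha>)) t * root_vec t k) = (\<Sum>t\<in>T'. c' t * root_vec t k)" for k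
      by (intro sum.cong) (auto simp: T'_def)
    note eqs = this
    show "(\<forall>t. t \<notin> T \<longrightarrow> (c'(I := \<alpha>)) t = 0) \<and> x = (\<lambda>k. \<Sum>t\<in>T. (c'(I := \<alpha>)) t * root_vec t k)"
    proof
      show "\<forall>t. t \<notin> T \<longrightarrow> (c'(I := \<alpha>)) t = 0" using c'(1) I by (auto simp: T'_def)
      show "x = (\<lambda>k. \<Sum>t\<in>T. (c'(I := \<alpha>)) t * root_vec t k)"
      proof
        fix k
        have "x' k = (\<Sum>t\<in>T'. c' t * root_vec t k)" using c'(2) by simp
        then have "x k = \<alpha> * root_vec I k + (\<Sum>t\<in>T'. c' t * root_vec t k)"
          unfolding x'_def by simp
        then show "x k = (\<Sum>t\<in>T. (c'(I := \<alpha>)) t * root_vec t k)"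
          using eqs[of k] by (simp add: split)
      qed
    qed
  next
    fix c assume c: "(\<forall>t. t \<notin> T \<longrightarrow> c t = 0) \<and> x = (\<lambda>k. \<Sum>t\<in>T. c t * root_vec t k)"
    have "x v = c I * s" using c split[of c v] atv[of c] by (simp add: s_def)
    then have cI: "c I = \<alpha>" unfolding \<alpha>_def using ss by (simp add: mult.assoc)
    have "(\<Sum>t\<in>T'. (c(I := 0)) t * root_vec t k) = (\<Sum>t\<in>T'. c t * root_vec t k)" for k
      by (intro sum.cong) (auto simp: T'_def)
    then have "(\<forall>t. t \<notin> T' \<longrightarrow> (c(I := 0)) t = 0) \<and> x' = (\<lambda>k. \<Sum>t\<in>T'. (c(I := 0)) t * root_vec t k)"
      using c cI by (auto simp: split x'_def T'_def fun_eq_iff)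
    then have "c(I := 0) = c'" by (rule c'u)
    then show "c = c'(I := \<alpha>)" using cI by (auto simp: fun_eq_iff split: if_splits)
  qed
qed

lemma adm_leaf:
  assumes n: "n \<ge> 3" and adm: "admissible n T"
  shows "leafp T"
  unfolding leafp_def
proof (intro allI impI)
  fix S assume ST: "S \<subseteq> T" and Sne: "S \<noteq> {}"
  have fin: "finite S" using adm ST unfolding admissible_def by (meson finite_subset)
  have arcs: "\<And>I. I \<in> T \<Longrightarrow> is_arc n I" using adm unfolding admissible_def by blast
  have pw: "\<And>I J. I \<in> T \<Longrightarrow> J \<in> T \<Longrightarrow> I \<noteq> J \<Longrightarrow>
        ((arc_set n I \<inter> arc_set n J \<noteq> {} \<and>
            (arc_set n I \<subset> arc_set n J \<or> arc_set n J \<subset> arc_set n I))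
         \<or> (arc_set n I \<inter> arc_set n J = {} \<and> snd I \<noteq> fst J \<and> snd J \<noteq> fst I))"
    using adm unfolding admissible_def by blast
  obtain M where M: "M \<in> arc_set n ` S" "\<forall>B\<in>arc_set n ` S. B \<le> M \<longrightarrow> M = B"
    using finite_has_minimal[of "arc_set n ` S"] fin Sne by blast
  then obtain I where I: "I \<in> S" "M = arc_set n I" by blast
  have minI: "\<And>J. J \<in> S \<Longrightarrow> \<not> arc_set n J \<subset> arc_set n I" using M I by blast
  obtain a b where ab: "I = (a,b)" by (cases I)
  have IT: "I \<in> T" using I ST by blast
  have va: "a \<in> {1..n}" "b \<in> {1..n}" "a \<noteq> b" using arcs[OF IT] ab by (auto simp: is_arc_def)
  have key: "\<And>J. J \<in> S \<Longrightarrow> J \<noteq> I \<Longrightarrow> fst J \<noteq> b \<and> snd J \<noteq> a \<and>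
      (fst J = a \<longrightarrow> arc_set n (a,b) \<subseteq> arc_set n J) \<and> (snd J = b \<longrightarrow> arc_set n (a,b) \<subseteq> arc_set n J)"
  proof -
    fix J assume J: "J \<in> S" "J \<noteq> I"
    obtain c d where cd: "J = (c,d)" by (cases J)
    have JT: "J \<in> T" using J ST by blast
    have vc: "c \<in> {1..n}" "d \<in> {1..n}" "c \<noteq> d" using arcs[OF JT] cd by (auto simp: is_arc_def)
    have "c \<noteq> b \<and> d \<noteq> a \<and> (c = a \<longrightarrow> arc_set n (a,b) \<subseteq> arc_set n (c,d))
     \<and> (d = b \<longrightarrow> arc_set n (a,b) \<subseteq> arc_set n (c,d))"
      apply (rule pairJ[OF n va(1,2) vc(1,2) va(3) vc(3)])
      using J ab cd apply simp
      using minI[OF J(1)] ab cd apply simp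
      using pw[OF IT JT J(2)[symmetric]] ab cd by (auto simp: Int_commute)
    then show "fst J \<noteq> b \<and> snd J \<noteq> a \<and>
      (fst J = a \<longrightarrow> arc_set n (a,b) \<subseteq> arc_set n J) \<and> (snd J = b \<longrightarrow> arc_set n (a,b) \<subseteq> arc_set n J)"
      using cd by simp
  qed
  show "\<exists>I\<in>S. \<exists>v. (v = fst I \<or> v = snd I) \<and> (\<forall>J\<in>S. J \<noteq> I \<longrightarrow> fst J \<noteq> v \<and> snd J \<noteq> v)"
  proof (rule ccontr)
    assume "\<not> ?thesis"
    then have H: "\<And>v. (v = fst I \<or> v = snd I) \<Longrightarrow> \<exists>J\<in>S. J \<noteq> I \<and> (fst J = v \<or> snd J = v)"
      using I(1) by blast
    have na: "\<exists>J\<in>S. J \<noteq> I \<and> (fst J = a \<or> snd J = a)" using H[of a] ab by simp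
    have nb: "\<exists>J\<in>S. J \<noteq> I \<and> (fst J = b \<or> snd J = b)" using H[of b] ab by simp
    obtain J1 where J1: "J1 \<in> S" "J1 \<noteq> I" "fst J1 = a \<or> snd J1 = a" using na by blast
    obtain J2 where J2: "J2 \<in> S" "J2 \<noteq> I" "fst J2 = b \<or> snd J2 = b" using nb by blast
    obtain d where d: "J1 = (a,d)" using key[OF J1(1,2)] J1(3) by (cases J1) auto
    obtain c where c: "J2 = (c,b)" using key[OF J2(1,2)] J2(3) by (cases J2) auto
    have s1: "arc_set n (a,b) \<subseteq> arc_set n (a,d)" using key[OF J1(1,2)] d by simp
    have s2: "arc_set n (a,b) \<subseteq> arc_set n (c,b)" using key[OF J2(1,2)] c by simp
    have J1T: "J1 \<in> T" and J2T: "J2 \<in> T" using J1 J2 ST by auto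
    have vd: "d \<in> {1..n}" "a \<noteq> d" using arcs[OF J1T] d by (auto simp: is_arc_def)
    have vcc: "c \<in> {1..n}" "c \<noteq> b" using arcs[OF J2T] c by (auto simp: is_arc_def)
    have db: "d \<noteq> b" using J1(2) ab d by auto
    have ca: "c \<noteq> a" using J2(2) ab c by auto
    have "J1 \<noteq> J2" using d c ca by auto
    from pw[OF J1T J2T this] d c
    have "(arc_set n (a,d) \<inter> arc_set n (c,b) \<noteq> {} \<and>
            (arc_set n (a,d) \<subset> arc_set n (c,b) \<or> arc_set n (c,b) \<subset> arc_set n (a,d)))
         \<or> (arc_set n (a,d) \<inter> arc_set n (c,b) = {} \<and> d \<noteq> c \<and> b \<noteq> a)" by simp
    then show False
      using final_contra[OF n va(1,2) vcc(1) vd(1) va(3) db ca vd(2) vcc(2) s1 s2] by blast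
  qed
qed

theorem mainTheorem14:
  fixes n :: nat and T :: "(nat \<times> nat) set"
  assumes "n \<ge> 3"
    and "admissible n T"
    and "card T = n - 1"
  shows "is_Z_basis root_vec T (root_lattice n)"
proof -
  have fin: "finite T" using assms(2) unfolding admissible_def by blast
  have arcs: "\<forall>I\<in>T. fst I \<in> {1..n} \<and> snd I \<in> {1..n} \<and> fst I \<noteq> snd I"
    using assms(2) unfolding admissible_def is_arc_def by blast
  have mem: "\<forall>t\<in>T. root_vec t \<in> root_lattice n"
  proof
    fix t assume t: "t \<in> T"
    have "\<forall>k. k \<notin> {1..n} \<longrightarrow> root_vec t k = 0" using arcs t by (auto simp: root_vec_def)
    moreover have "(\<Sum>k=1..n. root_vec t k) = 0" using arcs t by (intro sum_root_vec) auto
    ultimately show "root_vec t \<in> root_lattice n" by (simp add: root_lattice_def)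
  qed
  have lf: "leafp T" by (rule adm_leaf[OF assms(1,2)])
  have cc: "card T + 1 = card {1..n}" using assms(1,3) by simp
  show ?thesis unfolding is_Z_basis_def
  proof (intro conjI fin mem ballI)
    fix x assume "x \<in> root_lattice n"
    then have "\<forall>k. k \<notin> {1..n} \<longrightarrow> x k = 0" "(\<Sum>k\<in>{1..n}. x k) = 0"
      by (auto simp: root_lattice_def)
    then show "\<exists>!c. (\<forall>t. t \<notin> T \<longrightarrow> c t = 0) \<and> x = (\<lambda>k. \<Sum>t\<in>T. c t * root_vec t k)"
      using forest_basis[OF fin _ arcs lf cc] by simp
  qed
qed

end
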